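(* Let $A$ be a lattice generated by a finite set $X$ of join prime elements and satisfying Whitman's condition (W), let $B$ be a lattice with finite generating set $Y$, and let $g\colon A\to D$, $h\colon B\to D$ be epimorphisms onto a lattice $D$. Let $C=\{(a,b)\in A\times B: g(a)=h(b)\}$. Then for each finite subset $Z\subseteq C$ there exists $N\in\mathbb N$ such that for all $(a,b)$ in the sublattice $\langle Z\rangle$ generated by $Z$, all $k\in\mathbb N$ and all $w\in H_{X,k}$: if $a\ge w$ then $b\ge\beta_{h,k+N}(g(w))$ (where $\beta_{h,j}$ is computed with respect to $Y$).
   Context: Whitman's condition (W): for all finite $S,T$, if $\bigwedge S\le\bigvee T$ then some $s\in S$ has $s\le\bigvee T$ or some $t\in T$ has $\bigwedge S\le t$. An element $p$ is join prime if $p\le x\vee y$ implies $p\le x$ or $p\le y$. For a lattice with finite generating set $X$ and a subset $W$, let $W^\wedge:=\{\bigwedge U: U\subseteq W\text{ finite}\}$, $W^\vee:=\{\bigvee U: U\subseteq W\text{ finite}\}$ with conventions $\bigwedge\emptyset:=\bigvee X$, $\bigvee\emptyset:=\bigwedge X$; $G_{X,0}:=X$, $H_{X,k}:=G_{X,k}^\wedge$, $G_{X,k+1}:=H_{X,k}^\vee$. For the epimorphism $h\colon B\to D$ and $d\in D$: $\beta_{h,k}(d):=\bigwedge\{w\in H_{Y,k}: h(w)\ge d\}$. *)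

theory Defs
  imports Main "HOL-Library.Product_Order"
begin

inductive_set lgen :: "'a::lattice set \<Rightarrow> 'a set" for S :: "'a set" where
  lgen_base: "x \<in> S \<Longrightarrow> x \<in> lgen S"
| lgen_sup: "x \<in> lgen S \<Longrightarrow> y \<in> lgen S \<Longrightarrow> sup x y \<in> lgen S"
| lgen_inf: "x \<in> lgen S \<Longrightarrow> y \<in> lgen S \<Longrightarrow> inf x y \<in> lgen S"

definition lattice_hom :: "('a::lattice \<Rightarrow> 'b::lattice) \<Rightarrow> bool" where
  "lattice_hom f \<longleftrightarrow> (\<forall>x y. f (sup x y) = sup (f x) (f y) \<and> f (inf x y) = inf (f x) (f y))"

definition lattice_epi :: "('a::lattice \<Rightarrow> 'b::lattice) \<Rightarrow> bool" where
  "lattice_epi f \<longleftrightarrow> lattice_hom f \<and> surj f"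

definition join_prime :: "'a::lattice \<Rightarrow> bool" where
  "join_prime p \<longleftrightarrow> (\<forall>x y. p \<le> sup x y \<longrightarrow> p \<le> x \<or> p \<le> y)"

definition whitman :: "'a::lattice itself \<Rightarrow> bool" where
  "whitman _ \<longleftrightarrow> (\<forall>S T :: 'a set. finite S \<and> S \<noteq> {} \<and> finite T \<and> T \<noteq> {} \<longrightarrow>
     Inf_fin S \<le> Sup_fin T \<longrightarrow> (\<exists>s\<in>S. s \<le> Sup_fin T) \<or> (\<exists>t\<in>T. Inf_fin S \<le> t))"

text \<open>Finite meets/joins with the conventions: empty meet = join of X, empty join = meet of X.\<close>
definition meetX :: "'a::lattice set \<Rightarrow> 'a set \<Rightarrow> 'a" where
  "meetX X U = (if U = {} then Sup_fin X else Inf_fin U)"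

definition joinX :: "'a::lattice set \<Rightarrow> 'a set \<Rightarrow> 'a" where
  "joinX X U = (if U = {} then Inf_fin X else Sup_fin U)"

definition meets :: "'a::lattice set \<Rightarrow> 'a set \<Rightarrow> 'a set" where
  "meets X W = {meetX X U | U. U \<subseteq> W \<and> finite U}"

definition joins :: "'a::lattice set \<Rightarrow> 'a set \<Rightarrow> 'a set" where
  "joins X W = {joinX X U | U. U \<subseteq> W \<and> finite U}"

primrec G :: "'a::lattice set \<Rightarrow> nat \<Rightarrow> 'a set" where
  "G X 0 = X"
| "G X (Suc k) = joins X (meets X (G X k))"

definition H :: "'a::lattice set \<Rightarrow> nat \<Rightarrow> 'a set" where
  "H X k = meets X (G X k)"

definition beta :: "('b::lattice \<Rightarrow> 'd::lattice) \<Rightarrow> 'b set \<Rightarrow> nat \<Rightarrow> 'd \<Rightarrow> 'b" where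
  "beta h Y k d = meetX Y {w \<in> H Y k. d \<le> h w}"

end

theory Submission
  imports Defs
begin

lemma meets_sub: "W \<subseteq> meets X W"
  unfolding meets_def meetX_def
proof
  fix x assume "x \<in> W"
  thus "x \<in> {(if U = {} then Sup_fin X else Inf_fin U) | U. U \<subseteq> W \<and> finite U}"
    by (intro CollectI exI[of _ "{x}"]) auto
qed

lemma joins_sub: "W \<subseteq> joins X W"
  unfolding joins_def joinX_def
proof
  fix x assume "x \<in> W"
  thus "x \<in> {(if U = {} then Inf_fin X else Sup_fin U) | U. U \<subseteq> W \<and> finite U}"
    by (intro CollectI exI[of _ "{x}"]) auto
qed

lemma meets_mono: "W \<subseteq> W' \<Longrightarrow> meets X W \<subseteq> meets X W'"
  unfolding meets_def by blast

lemma G_mono_Suc: "G X k \<subseteq> G X (Suc k)"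
  using meets_sub[of "G X k" X] joins_sub[of "meets X (G X k)" X] by auto

lemma G_mono: "k \<le> m \<Longrightarrow> G X k \<subseteq> G X m"
  using lift_Suc_mono_le[of "G X", OF G_mono_Suc] by blast

lemma G_sub_H: "G X k \<subseteq> H X k" by (simp add: H_def meets_sub)

lemma H_mono: "k \<le> m \<Longrightarrow> H X k \<subseteq> H X m"
  unfolding H_def by (intro meets_mono G_mono)

lemma finite_meets: "finite W \<Longrightarrow> finite (meets X W)"
  by (rule finite_subset[of _ "meetX X ` Pow W"]) (auto simp: meets_def)

lemma finite_joins: "finite W \<Longrightarrow> finite (joins X W)"
  by (rule finite_subset[of _ "joinX X ` Pow W"]) (auto simp: joins_def)

lemma finite_G: "finite X \<Longrightarrow> finite (G X k)"
  by (induction k) (auto intro: finite_meets finite_joins)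

lemma finite_H: "finite X \<Longrightarrow> finite (H X k)"
  unfolding H_def by (intro finite_meets finite_G)

lemma top_gen:
  assumes "finite Y" "lgen Y = UNIV" shows "z \<le> Sup_fin Y"
proof -
  have "z \<in> lgen Y" using assms by simp
  then show ?thesis
  proof induction
    case (lgen_base x) show ?case using Sup_fin.coboundedI[OF assms(1) lgen_base] .
  next
    case (lgen_sup x y) thus ?case by simp
  next
    case (lgen_inf x y) thus ?case by (simp add: le_infI1)
  qed
qed

definition Hn :: "'a::lattice set \<Rightarrow> nat \<Rightarrow> 'a set" where
  "Hn X k = {Inf_fin U | U. U \<subseteq> G X k \<and> finite U \<and> U \<noteq> {}}"

lemma H_cases: "w \<in> H X k \<Longrightarrow> w = Sup_fin X \<or> w \<in> Hn X k"
proof -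
  assume "w \<in> H X k"
  then obtain U where U: "w = meetX X U" "U \<subseteq> G X k" "finite U"
    unfolding H_def meets_def by blast
  show ?thesis
  proof (cases "U = {}")
    case True thus ?thesis using U by (simp add: meetX_def)
  next
    case False thus ?thesis using U unfolding Hn_def meetX_def by auto
  qed
qed

lemma Hn_mono: "k \<le> m \<Longrightarrow> Hn X k \<subseteq> Hn X m"
proof -
  assume "k \<le> m"
  hence "G X k \<subseteq> G X m" by (rule G_mono)
  thus ?thesis unfolding Hn_def by blast
qed

lemma G_sub_Hn: "x \<in> G X k \<Longrightarrow> x \<in> Hn X k"
proof -
  assume "x \<in> G X k"
  hence "Inf_fin {x} \<in> Hn X k" unfolding Hn_def by blast
  thus ?thesis by simp
qed

lemma gen_rep:
  assumes "v \<in> H X k" "finite X" "X \<noteq> {}"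
  shows "\<exists>R. finite R \<and> R \<noteq> {} \<and> R \<subseteq> Hn X k \<and> Sup_fin R = v"
proof (cases "v \<in> Hn X k")
  case True thus ?thesis by (intro exI[of _ "{v}"]) auto
next
  case False
  hence "v = Sup_fin X" using H_cases assms(1) by blast
  moreover have "X \<subseteq> Hn X k" using G_mono[of 0 k X] G_sub_Hn by auto
  ultimately show ?thesis using assms by blast
qed

lemma gen_rep_set:
  assumes "finite V" "V \<noteq> {}" "V \<subseteq> H X k" "finite X" "X \<noteq> {}"
  shows "\<exists>V'. finite V' \<and> V' \<noteq> {} \<and> V' \<subseteq> Hn X k \<and> Sup_fin V' = Sup_fin V"
  using assms(1,2,3)
proof (induction V rule: finite_ne_induct)
  case (singleton x)
  then show ?case using gen_rep[of x X k] assms(4,5) by auto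
next
  case (insert x F)
  from insert obtain R where R: "finite R" "R \<noteq> {}" "R \<subseteq> Hn X k" "Sup_fin R = x"
    using gen_rep[of x X k] assms(4,5) by auto
  from insert obtain V' where V': "finite V'" "V' \<noteq> {}" "V' \<subseteq> Hn X k" "Sup_fin V' = Sup_fin F"
    by auto
  show ?case
  proof (rule exI[of _ "R \<union> V'"], intro conjI)
    show "finite (R \<union> V')" "R \<union> V' \<noteq> {}" "R \<union> V' \<subseteq> Hn X k" using R V' by auto
    have "Sup_fin (R \<union> V') = sup (Sup_fin R) (Sup_fin V')" using R V' by (simp add: Sup_fin.union)
    also have "\<dots> = sup x (Sup_fin F)" using R V' by simp
    also have "\<dots> = Sup_fin (insert x F)" using insert.hyps by (simp add: Sup_fin.insert)
    finally show "Sup_fin (R \<union> V') = Sup_fin (insert x F)" .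
  qed
qed

lemma G_Suc_rep:
  assumes "u \<in> G X (Suc j)" "finite X" "X \<noteq> {}"
  shows "\<exists>V'. finite V' \<and> V' \<noteq> {} \<and> V' \<subseteq> Hn X j \<and> Sup_fin V' = u"
proof -
  obtain V where V: "u = joinX X V" "V \<subseteq> H X j" "finite V"
    using assms(1) by (auto simp: joins_def H_def)
  show ?thesis
  proof (cases "V = {}")
    case True
    hence "u = Inf_fin X" using V by (simp add: joinX_def)
    moreover have "Inf_fin X \<in> Hn X j"
      unfolding Hn_def using G_mono[of 0 j X] assms by auto
    ultimately show ?thesis by (intro exI[of _ "{Inf_fin X}"]) auto
  next
    case False
    thus ?thesis using gen_rep_set[OF V(3) False V(2) assms(2,3)] V(1)
      by (simp add: joinX_def)
  qed
qed

lemma hom_mono: "lattice_hom f \<Longrightarrow> x \<le> y \<Longrightarrow> f x \<le> f y"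
proof -
  assume hf: "lattice_hom f" and xy: "x \<le> y"
  have "inf x y = x" using xy by (rule inf_absorb1)
  hence "f x = f (inf x y)" by simp
  also have "\<dots> = inf (f x) (f y)" using hf unfolding lattice_hom_def by blast
  finally have "inf (f x) (f y) = f x" by simp
  thus "f x \<le> f y" by (simp add: le_iff_inf)
qed

lemma hom_Sup_fin:
  assumes "lattice_hom f" "finite V" "V \<noteq> {}"
  shows "f (Sup_fin V) = Sup_fin (f ` V)"
  using assms(2,3)
proof (induction V rule: finite_ne_induct)
  case (singleton x) then show ?case by simp
next
  case (insert x F)
  then show ?case using assms(1) by (simp add: lattice_hom_def)
qed

lemma H_inf:
  assumes "finite Y" "lgen Y = UNIV" "t1 \<in> H Y j" "t2 \<in> H Y j"
  shows "inf t1 t2 \<in> H Y j"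
proof -
  obtain U1 U2 where U: "t1 = meetX Y U1" "t2 = meetX Y U2" "U1 \<subseteq> G Y j" "U2 \<subseteq> G Y j"
    "finite U1" "finite U2"
    using assms(3,4) by (auto simp: H_def meets_def)
  have "meetX Y (U1 \<union> U2) = inf t1 t2"
  proof (cases "U1 = {}")
    case True
    have "inf (Sup_fin Y) t2 = t2" using top_gen[OF assms(1,2), of t2] by (rule inf_absorb2)
    thus ?thesis using True U by (simp add: meetX_def)
  next
    case F1: False
    show ?thesis
    proof (cases "U2 = {}")
      case True
      have "inf t1 (Sup_fin Y) = t1" using top_gen[OF assms(1,2), of t1] by (rule inf_absorb1)
      thus ?thesis using True F1 U by (simp add: meetX_def)
    next
      case False
      thus ?thesis using F1 U by (simp add: meetX_def Inf_fin.union)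
    qed
  qed
  moreover have "meetX Y (U1 \<union> U2) \<in> H Y j"
    unfolding H_def meets_def using U by blast
  ultimately show ?thesis by simp
qed

lemma level:
  assumes "finite Y" "z \<in> lgen Y" shows "\<exists>m. z \<in> G Y m"
  using assms(2)
proof induction
  case (lgen_base x)
  then show ?case by (intro exI[of _ 0]) simp
next
  case (lgen_sup x y)
  then obtain m1 m2 where m: "x \<in> G Y m1" "y \<in> G Y m2" by blast
  have "G Y m1 \<subseteq> G Y (max m1 m2)" "G Y m2 \<subseteq> G Y (max m1 m2)" by (rule G_mono, simp)+
  hence xy: "x \<in> G Y (max m1 m2)" "y \<in> G Y (max m1 m2)" using m by blast+
  have sub: "{x, y} \<subseteq> meets Y (G Y (max m1 m2))" using xy meets_sub[of "G Y (max m1 m2)" Y] by blast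
  have "joinX Y {x, y} \<in> joins Y (meets Y (G Y (max m1 m2)))"
    unfolding joins_def by (rule CollectI, rule exI[of _ "{x,y}"]) (use sub in auto)
  hence "joinX Y {x, y} \<in> G Y (Suc (max m1 m2))" by simp
  moreover have "joinX Y {x, y} = sup x y" by (simp add: joinX_def)
  ultimately show ?case by (intro exI[of _ "Suc (max m1 m2)"]) simp
next
  case (lgen_inf x y)
  then obtain m1 m2 where m: "x \<in> G Y m1" "y \<in> G Y m2" by blast
  have "G Y m1 \<subseteq> G Y (max m1 m2)" "G Y m2 \<subseteq> G Y (max m1 m2)" by (rule G_mono, simp)+
  hence xy: "x \<in> G Y (max m1 m2)" "y \<in> G Y (max m1 m2)" using m by blast+
  have "meetX Y {x, y} \<in> meets Y (G Y (max m1 m2))"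
    unfolding meets_def by (rule CollectI, rule exI[of _ "{x,y}"]) (simp add: xy)
  hence "meetX Y {x, y} \<in> G Y (Suc (max m1 m2))" using joins_sub[of "meets Y (G Y (max m1 m2))" Y] by auto
  moreover have "meetX Y {x, y} = inf x y" by (simp add: meetX_def)
  ultimately show ?case by (intro exI[of _ "Suc (max m1 m2)"]) simp
qed


lemma lgen_empty: "x \<in> lgen S \<Longrightarrow> S = {} \<Longrightarrow> False"
  by (induction rule: lgen.induct) auto

theorem mainTheorem12:
  fixes X :: "'a::lattice set" and Y :: "'b::lattice set"
    and g :: "'a \<Rightarrow> 'd::lattice" and h :: "'b \<Rightarrow> 'd"
  assumes "finite X" and "lgen X = UNIV" and "\<forall>x\<in>X. join_prime x"
    and "whitman TYPE('a)"
    and "finite Y" and "lgen Y = UNIV"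
    and "lattice_epi g" and "lattice_epi h"
  shows "\<forall>Z. finite Z \<and> Z \<subseteq> {(a, b). g a = h b} \<longrightarrow>
           (\<exists>N::nat. \<forall>a b k w. (a, b) \<in> lgen Z \<and> w \<in> H X k \<and> w \<le> a
              \<longrightarrow> beta h Y (k + N) (g w) \<le> b)"
proof (intro allI impI)
  fix Z :: "('a \<times> 'b) set"
  assume Zh: "finite Z \<and> Z \<subseteq> {(a, b). g a = h b}"
  have gh: "lattice_hom g" "lattice_hom h" using assms(7,8) by (auto simp: lattice_epi_def)
  have Xne: "X \<noteq> {}" using assms(2) lgen_empty by blast
  define lev where "lev b = (SOME m. b \<in> H Y m)" for b
  have lev: "b \<in> H Y (lev b)" for b
  proof -
    obtain m where "b \<in> G Y m" using level[OF assms(5), of b] assms(6) by auto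
    hence "\<exists>m. b \<in> H Y m" using G_sub_H by blast
    thus ?thesis unfolding lev_def by (rule someI_ex)
  qed
  define N where "N = Max (insert 0 ((lev \<circ> snd) ` Z))"
  have base: "p \<in> Z \<Longrightarrow> lev (snd p) \<le> N" for p
    unfolding N_def using Zh by (intro Max_ge) auto
  have W: "w \<le> a1 \<or> w \<le> a2 \<or> (\<exists>u \<in> G X k. w \<le> u \<and> u \<le> sup a1 a2)"
    if hw: "w \<in> Hn X k" and hle: "w \<le> sup a1 a2" for w k a1 a2
  proof -
    obtain U where U: "w = Inf_fin U" "U \<subseteq> G X k" "finite U" "U \<noteq> {}"
      using hw unfolding Hn_def by blast
    have "Inf_fin U \<le> Sup_fin {a1, a2}" using hle U by simp
    hence "(\<exists>s\<in>U. s \<le> Sup_fin {a1, a2}) \<or> (\<exists>t\<in>{a1, a2}. Inf_fin U \<le> t)"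
    proof -
      have wh: "\<forall>S T :: 'a set. finite S \<and> S \<noteq> {} \<and> finite T \<and> T \<noteq> {} \<longrightarrow>
          Inf_fin S \<le> Sup_fin T \<longrightarrow> (\<exists>s\<in>S. s \<le> Sup_fin T) \<or> (\<exists>t\<in>T. Inf_fin S \<le> t)"
        using assms(4) unfolding whitman_def by blast
      have "finite U \<and> U \<noteq> {} \<and> finite {a1, a2} \<and> {a1, a2} \<noteq> {} \<longrightarrow>
          Inf_fin U \<le> Sup_fin {a1, a2} \<longrightarrow> (\<exists>s\<in>U. s \<le> Sup_fin {a1, a2}) \<or> (\<exists>t\<in>{a1, a2}. Inf_fin U \<le> t)"
        using spec[OF spec[OF wh, of U], of "{a1, a2}"] .
      thus ?thesis using U \<open>Inf_fin U \<le> Sup_fin {a1, a2}\<close> by simp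
    qed
    thus ?thesis using U by (auto intro: Inf_fin.coboundedI)
  qed
  have Q: "\<forall>k w. w \<in> Hn X k \<and> w \<le> fst p \<longrightarrow> (\<exists>t \<in> H Y (k+N). g w \<le> h t \<and> t \<le> snd p)"
    if "p \<in> lgen Z" for p
    using that
  proof (induction p rule: lgen.induct)
    case (lgen_base p)
    show ?case
    proof (intro allI impI)
      fix k w assume kw: "w \<in> Hn X k \<and> w \<le> fst p"
      have "lev (snd p) \<le> k+N" using base[OF lgen_base] by simp
      hence "snd p \<in> H Y (k+N)" using lev[of "snd p"] H_mono by blast
      moreover have "g (fst p) = h (snd p)" using Zh lgen_base by (cases p) auto
      moreover have "g w \<le> g (fst p)" using hom_mono[OF gh(1), of w "fst p"] kw by blast
      ultimately have "snd p \<in> H Y (k+N)" "g w \<le> h (snd p)" by auto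
      then show "\<exists>t \<in> H Y (k+N). g w \<le> h t \<and> t \<le> snd p" by blast
    qed
  next
    case (lgen_inf p q)
    show ?case
    proof (intro allI impI)
      fix k w assume kw: "w \<in> Hn X k \<and> w \<le> fst (inf p q)"
      obtain t1 where t1: "t1 \<in> H Y (k+N)" "g w \<le> h t1" "t1 \<le> snd p"
        using lgen_inf.IH(1) kw by auto
      obtain t2 where t2: "t2 \<in> H Y (k+N)" "g w \<le> h t2" "t2 \<le> snd q"
        using lgen_inf.IH(2) kw by auto
      have "inf t1 t2 \<in> H Y (k+N)" using H_inf[OF assms(5,6) t1(1) t2(1)] .
      moreover have "g w \<le> h (inf t1 t2)" using gh(2) t1 t2 by (simp add: lattice_hom_def)
      moreover have "inf t1 t2 \<le> snd (inf p q)" using t1(3) t2(3) by (simp add: le_infI1 le_infI2)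
      ultimately show "\<exists>t \<in> H Y (k+N). g w \<le> h t \<and> t \<le> snd (inf p q)" by blast
    qed
  next
    case (lgen_sup p q)
    have "\<forall>w. w \<in> Hn X k \<and> w \<le> sup (fst p) (fst q) \<longrightarrow>
            (\<exists>t \<in> H Y (k+N). g w \<le> h t \<and> t \<le> sup (snd p) (snd q))" for k
    proof (induction k rule: less_induct)
      case (less k)
      show ?case
      proof (intro allI impI)
        fix w assume kw: "w \<in> Hn X k \<and> w \<le> sup (fst p) (fst q)"
        from W[of w k "fst p" "fst q"] kw
        consider "w \<le> fst p" | "w \<le> fst q" | u where "u \<in> G X k" "w \<le> u" "u \<le> sup (fst p) (fst q)"
          by blast
        then show "\<exists>t \<in> H Y (k+N). g w \<le> h t \<and> t \<le> sup (snd p) (snd q)"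
        proof cases
          case 1
          then obtain t where "t \<in> H Y (k+N)" "g w \<le> h t" "t \<le> snd p"
            using lgen_sup.IH(1) kw by auto
          then show ?thesis by (auto intro: le_supI1)
        next
          case 2
          then obtain t where "t \<in> H Y (k+N)" "g w \<le> h t" "t \<le> snd q"
            using lgen_sup.IH(2) kw by auto
          then show ?thesis by (auto intro: le_supI2)
        next
          case 3
          have gwu: "g w \<le> g u" using hom_mono[OF gh(1) 3(2)] .
          show ?thesis
          proof (cases k)
            case 0
            hence uX: "u \<in> X" using 3 by simp
            hence "u \<le> fst p \<or> u \<le> fst q" using assms(3) 3(3) unfolding join_prime_def by blast
            moreover have "u \<in> Hn X k" using 3(1) G_sub_Hn by blast
            ultimately obtain t where "t \<in> H Y (k+N)" "g u \<le> h t" "t \<le> snd p \<or> t \<le> snd q"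
              using lgen_sup.IH(1)[THEN spec[of _ k], THEN spec[of _ u]]
                lgen_sup.IH(2)[THEN spec[of _ k], THEN spec[of _ u]] by blast
            then show ?thesis using gwu by (auto intro: le_supI1 le_supI2 order_trans)
          next
            case (Suc j)
            obtain V' where V': "finite V'" "V' \<noteq> {}" "V' \<subseteq> Hn X j" "Sup_fin V' = u"
              using G_Suc_rep[of u X j] 3(1) Suc assms(1) Xne by auto
            have ex: "\<forall>v\<in>V'. \<exists>t. t \<in> H Y (j+N) \<and> g v \<le> h t \<and> t \<le> sup (snd p) (snd q)"
            proof
              fix v assume v: "v \<in> V'"
              have "v \<le> u" using V' v by (auto intro: Sup_fin.coboundedI)
              hence "v \<le> sup (fst p) (fst q)" using 3(3) by simp
              thus "\<exists>t. t \<in> H Y (j+N) \<and> g v \<le> h t \<and> t \<le> sup (snd p) (snd q)"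
                using less.IH[of j] Suc v V'(3) by auto
            qed
            obtain \<tau> where \<tau>: "\<forall>v\<in>V'. \<tau> v \<in> H Y (j+N) \<and> g v \<le> h (\<tau> v) \<and> \<tau> v \<le> sup (snd p) (snd q)"
              using bchoice[OF ex] by blast
            define s where "s = Sup_fin (\<tau> ` V')"
            have "s = joinX Y (\<tau> ` V')" using V' by (simp add: s_def joinX_def)
            moreover have "\<tau> ` V' \<subseteq> H Y (j+N)" using \<tau> by auto
            ultimately have "s \<in> G Y (Suc (j+N))" using V'(1)
              unfolding G.simps joins_def H_def by blast
            hence "s \<in> H Y (Suc (j+N))" using G_sub_H[of Y "Suc (j+N)"] by blast
            hence sH: "s \<in> H Y (k+N)" using Suc by simp
            have "g u = Sup_fin (g ` V')" using hom_Sup_fin[OF gh(1) V'(1,2)] V'(4) by simp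
            also have "\<dots> \<le> h s"
            proof (rule Sup_fin.boundedI)
              show "finite (g ` V')" "g ` V' \<noteq> {}" using V' by auto
            next
              fix d assume "d \<in> g ` V'"
              then obtain v where v: "v \<in> V'" "d = g v" by auto
              have "\<tau> v \<le> s" unfolding s_def using V' v by (auto intro: Sup_fin.coboundedI)
              hence "h (\<tau> v) \<le> h s" using hom_mono[OF gh(2)] by blast
              thus "d \<le> h s" using \<tau> v by (auto intro: order_trans)
            qed
            finally have "g w \<le> h s" using gwu by simp
            moreover have "s \<le> sup (snd p) (snd q)"
              unfolding s_def using V' \<tau> by (auto intro: Sup_fin.boundedI)
            ultimately show ?thesis using sH by blast
          qed
        qed
      qed
    qed
    then show ?case by simp
  qed
  show "\<exists>N::nat. \<forall>a b k w. (a, b) \<in> lgen Z \<and> w \<in> H X k \<and> w \<le> a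
              \<longrightarrow> beta h Y (k + N) (g w) \<le> b"
  proof (intro exI[of _ "N+1"] allI impI)
    fix a b k w assume abw: "(a, b) \<in> lgen Z \<and> w \<in> H X k \<and> w \<le> a"
    have "w \<in> Hn X (Suc k)"
    proof (cases "w = Sup_fin X")
      case True
      have "joinX X X \<in> joins X (meets X X)" unfolding joins_def using meets_sub[of X X] assms(1)
        by blast
      hence "joinX X X \<in> G X 1" by simp
      hence "Sup_fin X \<in> G X (Suc k)" using Xne G_mono[of 1 "Suc k" X] by (auto simp: joinX_def)
      then show ?thesis using True G_sub_Hn by blast
    next
      case False
      then show ?thesis using H_cases abw Hn_mono[of k "Suc k" X] by auto
    qed
    then have "\<exists>t \<in> H Y (Suc k + N). g w \<le> h t \<and> t \<le> b"
      using Q[OF conjunct1[OF abw], THEN spec[of _ "Suc k"], THEN spec[of _ w]] abw by simp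
    then obtain t where t: "t \<in> H Y (Suc k + N)" "g w \<le> h t" "t \<le> b" by blast
    let ?S = "{w' \<in> H Y (k + (N+1)). g w \<le> h w'}"
    have tS: "t \<in> ?S" using t by simp
    have fS: "finite ?S" using finite_H[OF assms(5)] by simp
    have "beta h Y (k + (N+1)) (g w) = Inf_fin ?S"
      unfolding beta_def meetX_def using tS by auto
    also have "\<dots> \<le> t" using Inf_fin.coboundedI[OF fS tS] .
    finally show "beta h Y (k + (N+1)) (g w) \<le> b" using t(3) by simp
  qed
qed

end
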